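(* Let $\alpha,\beta\in\Bbbk^*$ be not roots of unity and $r,i\in\mathbb{Z}$ with $\alpha^w=\beta^n$. Then the Nichols algebra $\mathcal{B}(V(\alpha,\beta,x^rg^i))$ of the Yetter-Drinfeld module $V(\alpha,\beta,x^rg^i)$ over $B(n,w,\gamma)$ is infinite-dimensional.
   Context: $\Bbbk$ is an algebraically closed field of characteristic $0$; $n,w$ positive integers, $\gamma$ a primitive $n$-th root of unity. $H=B(n,w,\gamma)$ is the Hopf algebra generated by $x^{\pm1},g,y$ with relations $xx^{-1}=x^{-1}x=1$, $xg=gx$, $xy=yx$, $yg=\gamma gy$, $y^n=1-x^w=1-g^n$, with $\Delta(x)=x\otimes x$, $\Delta(g)=g\otimes g$, $\Delta(y)=y\otimes g+1\otimes y$, $\varepsilon(x)=\varepsilon(g)=1$, $\varepsilon(y)=0$, $S(x)=x^{-1}$, $S(g)=g^{-1}$, $S(y)=-yg^{-1}$. Yetter-Drinfeld modules are left-left: $\delta(h\cdot v)=h_{(1)}v_{(-1)}S(h_{(3)})\otimes h_{(2)}\cdot v_{(0)}$. The Nichols algebra of a Yetter-Drinfeld module $U$ is $\mathcal{B}(U)=T(U)/\bigoplus_{k\ge2}\ker(\mathfrak{S}_k)$, where $\mathfrak{S}_k$ is the braided symmetrizer on $U^{\otimes k}$ for the braiding $c(u\otimes u')=u_{(-1)}\cdot u'\otimes u_{(0)}$. Define $c_\beta^{r,i}(k,l)\in H$ ($0\le l\le k$) by $c_\beta^{r,i}(0,0)=x^rg^i$ and, for $k\ge0$: $c_\beta^{r,i}(k+1,0)=c_\beta^{r,i}(k,0)S(y)+\beta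 yc_\beta^{r,i}(k,0)S(g)$; for $0<l<k+1$, $c_\beta^{r,i}(k+1,l)=c_\beta^{r,i}(k,l)S(y)+\beta\gamma^{-l}yc_\beta^{r,i}(k,l)S(g)+c_\beta^{r,i}(k,l-1)S(g)$; $c_\beta^{r,i}(k+1,k+1)=c_\beta^{r,i}(k,k)S(g)$. When $\beta^n\ne1$ (as here), $V(\alpha,\beta,x^rg^i)$ is the Yetter-Drinfeld module over $H$ with basis $v_0,\dots,v_{n-1}$ and $x\cdot v_k=\alpha v_k$, $g\cdot v_k=\beta\gamma^{-k}v_k$, $y\cdot v_k=v_{k+1}$ ($k<n-1$), $y\cdot v_{n-1}=(1-\beta^n)v_0$, $\delta(v_k)=\sum_{l=0}^kc_\beta^{r,i}(k,l)\otimes v_l$. *)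

theory Defs
  imports Main "HOL-Library.Function_Algebras" "HOL-Combinatorics.Transposition"
    "HOL-Combinatorics.Permutations" "HOL-Computational_Algebra.Polynomial"
begin

text \<open>An endomorphism of V is an n x n matrix M :: nat => nat => 'a, where M p q is the
  coefficient of v_p in M . v_q.\<close>

definition mat_mult :: "nat \<Rightarrow> (nat \<Rightarrow> nat \<Rightarrow> 'a::field) \<Rightarrow> (nat \<Rightarrow> nat \<Rightarrow> 'a) \<Rightarrow> (nat \<Rightarrow> nat \<Rightarrow> 'a)" where
  "mat_mult n A B = (\<lambda>p q. \<Sum>j<n. A p j * B j q)"

definition mat_scal :: "'a::field \<Rightarrow> (nat \<Rightarrow> nat \<Rightarrow> 'a) \<Rightarrow> (nat \<Rightarrow> nat \<Rightarrow> 'a)" where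
  "mat_scal c A = (\<lambda>p q. c * A p q)"

text \<open>Action of the generators of B(n,w,gamma) on V(alpha,beta,x^r g^i).\<close>

definition rho_x :: "'a::field \<Rightarrow> nat \<Rightarrow> nat \<Rightarrow> 'a" where
  "rho_x \<alpha> = (\<lambda>p q. if p = q then \<alpha> else 0)"

definition rho_g :: "nat \<Rightarrow> 'a::field \<Rightarrow> 'a \<Rightarrow> nat \<Rightarrow> nat \<Rightarrow> 'a" where
  "rho_g n \<gamma> \<beta> = (\<lambda>p q. if p = q then \<beta> * inverse (\<gamma> ^ p) else 0)"

definition rho_g_pow :: "nat \<Rightarrow> 'a::field \<Rightarrow> 'a \<Rightarrow> int \<Rightarrow> nat \<Rightarrow> nat \<Rightarrow> 'a" where
  "rho_g_pow n \<gamma> \<beta> j = (\<lambda>p q. if p = q then (\<beta> * inverse (\<gamma> ^ p)) powi j else 0)"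

definition rho_y :: "nat \<Rightarrow> 'a::field \<Rightarrow> nat \<Rightarrow> nat \<Rightarrow> 'a" where
  "rho_y n \<beta> = (\<lambda>p q. if q + 1 < n then (if p = q + 1 then 1 else 0)
                       else (if p = 0 then 1 - \<beta> ^ n else 0))"

text \<open>rho(S(g)) = rho(g^{-1}) and rho(S(y)) = - rho(y) rho(g^{-1}).\<close>
definition rho_Sg :: "nat \<Rightarrow> 'a::field \<Rightarrow> 'a \<Rightarrow> nat \<Rightarrow> nat \<Rightarrow> 'a" where
  "rho_Sg n \<gamma> \<beta> = rho_g_pow n \<gamma> \<beta> (-1)"

definition rho_Sy :: "nat \<Rightarrow> 'a::field \<Rightarrow> 'a \<Rightarrow> nat \<Rightarrow> nat \<Rightarrow> 'a" where
  "rho_Sy n \<gamma> \<beta> = mat_scal (-1) (mat_mult n (rho_y n \<beta>) (rho_Sg n \<gamma> \<beta>))"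

definition rho_base :: "nat \<Rightarrow> 'a::field \<Rightarrow> 'a \<Rightarrow> 'a \<Rightarrow> int \<Rightarrow> int \<Rightarrow> nat \<Rightarrow> nat \<Rightarrow> 'a" where
  "rho_base n \<gamma> \<alpha> \<beta> r i = mat_mult n (mat_scal (\<alpha> powi r) (\<lambda>p q. if p = q then 1 else 0))
                                         (rho_g_pow n \<gamma> \<beta> i)"

text \<open>Image in End(V) of the elements c_beta^{r,i}(k,l) of H, via the recursion of the paper
  (rho is an algebra map, so the recursion is transported verbatim).  Set to 0 for l > k.\<close>
fun cmat :: "nat \<Rightarrow> 'a::field \<Rightarrow> 'a \<Rightarrow> 'a \<Rightarrow> int \<Rightarrow> int \<Rightarrow> nat \<Rightarrow> nat \<Rightarrow> nat \<Rightarrow> nat \<Rightarrow> 'a" where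
  "cmat n \<gamma> \<alpha> \<beta> r i 0 l =
     (if l = 0 then rho_base n \<gamma> \<alpha> \<beta> r i else (\<lambda>_ _. 0))"
| "cmat n \<gamma> \<alpha> \<beta> r i (Suc k) l =
     (if l = 0 then
        mat_mult n (cmat n \<gamma> \<alpha> \<beta> r i k 0) (rho_Sy n \<gamma> \<beta>)
        + mat_scal \<beta> (mat_mult n (mat_mult n (rho_y n \<beta>) (cmat n \<gamma> \<alpha> \<beta> r i k 0)) (rho_Sg n \<gamma> \<beta>))
      else if l < Suc k then
        mat_mult n (cmat n \<gamma> \<alpha> \<beta> r i k l) (rho_Sy n \<gamma> \<beta>)
        + mat_scal (\<beta> * inverse (\<gamma> ^ l))
            (mat_mult n (mat_mult n (rho_y n \<beta>) (cmat n \<gamma> \<alpha> \<beta> r i k l)) (rho_Sg n \<gamma> \<beta>))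
        + mat_mult n (cmat n \<gamma> \<alpha> \<beta> r i k (l - 1)) (rho_Sg n \<gamma> \<beta>)
      else if l = Suc k then
        mat_mult n (cmat n \<gamma> \<alpha> \<beta> r i k k) (rho_Sg n \<gamma> \<beta>)
      else (\<lambda>_ _. 0))"

text \<open>Braiding c(v_a (x) v_b) = sum_{l<=a} c(a,l).v_b (x) v_l; braid_coef ... a b p l is the
  coefficient of v_p (x) v_l in c(v_a (x) v_b).\<close>
definition braid_coef :: "nat \<Rightarrow> 'a::field \<Rightarrow> 'a \<Rightarrow> 'a \<Rightarrow> int \<Rightarrow> int \<Rightarrow> nat \<Rightarrow> nat \<Rightarrow> nat \<Rightarrow> nat \<Rightarrow> 'a" where
  "braid_coef n \<gamma> \<alpha> \<beta> r i a b p l = (if l \<le> a then cmat n \<gamma> \<alpha> \<beta> r i a l p b else 0)"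

text \<open>An element of V^{(x)k} is a function on words (basis v_{u_0} (x) ... (x) v_{u_{k-1}}).\<close>
definition words :: "nat \<Rightarrow> nat \<Rightarrow> nat list set" where
  "words n k = {u. length u = k \<and> set u \<subseteq> {..<n}}"

definition tensor_space :: "nat \<Rightarrow> nat \<Rightarrow> (nat list \<Rightarrow> 'a::field) set" where
  "tensor_space n k = {f. \<forall>u. u \<notin> words n k \<longrightarrow> f u = 0}"

definition tscale :: "'a::field \<Rightarrow> (nat list \<Rightarrow> 'a) \<Rightarrow> (nat list \<Rightarrow> 'a)" where
  "tscale c f = (\<lambda>u. c * f u)"

text \<open>c_j = id^{(x)j} (x) c (x) id acting on positions j, j+1 (0-based), for a braiding
  given by coefficients C a b p l.\<close>
definition braid_op :: "(nat \<Rightarrow> nat \<Rightarrow> nat \<Rightarrow> nat \<Rightarrow> 'a::field) \<Rightarrow> nat \<Rightarrow> nat \<Rightarrow> nat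
    \<Rightarrow> (nat list \<Rightarrow> 'a) \<Rightarrow> (nat list \<Rightarrow> 'a)" where
  "braid_op C n k j f = (\<lambda>u. if u \<in> words n k then
      (\<Sum>a<n. \<Sum>b<n. f (u[j := a, Suc j := b]) * C a b (u ! j) (u ! Suc j)) else 0)"

definition word_op :: "(nat \<Rightarrow> nat \<Rightarrow> nat \<Rightarrow> nat \<Rightarrow> 'a::field) \<Rightarrow> nat \<Rightarrow> nat \<Rightarrow> nat list
    \<Rightarrow> (nat list \<Rightarrow> 'a) \<Rightarrow> (nat list \<Rightarrow> 'a)" where
  "word_op C n k ws = foldr (\<lambda>j g. braid_op C n k j \<circ> g) ws id"

definition perm_of_word :: "nat list \<Rightarrow> nat \<Rightarrow> nat" where
  "perm_of_word ws = foldr (\<lambda>j \<sigma>. Transposition.transpose j (Suc j) \<circ> \<sigma>) ws id"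

definition reduced_word :: "nat \<Rightarrow> (nat \<Rightarrow> nat) \<Rightarrow> nat list \<Rightarrow> bool" where
  "reduced_word k \<sigma> ws \<longleftrightarrow> (\<forall>j\<in>set ws. Suc j < k) \<and> perm_of_word ws = \<sigma> \<and>
     (\<forall>ws'. (\<forall>j\<in>set ws'. Suc j < k) \<and> perm_of_word ws' = \<sigma> \<longrightarrow> length ws \<le> length ws')"

definition matsumoto :: "(nat \<Rightarrow> nat \<Rightarrow> nat \<Rightarrow> nat \<Rightarrow> 'a::field) \<Rightarrow> nat \<Rightarrow> nat \<Rightarrow> (nat \<Rightarrow> nat)
    \<Rightarrow> (nat list \<Rightarrow> 'a) \<Rightarrow> (nat list \<Rightarrow> 'a)" where
  "matsumoto C n k \<sigma> = word_op C n k (SOME ws. reduced_word k \<sigma> ws)"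

definition braided_symmetrizer :: "(nat \<Rightarrow> nat \<Rightarrow> nat \<Rightarrow> nat \<Rightarrow> 'a::field) \<Rightarrow> nat \<Rightarrow> nat
    \<Rightarrow> (nat list \<Rightarrow> 'a) \<Rightarrow> (nat list \<Rightarrow> 'a)" where
  "braided_symmetrizer C n k f = (\<lambda>u. \<Sum>\<sigma>\<in>{\<sigma>. \<sigma> permutes {..<k}}. matsumoto C n k \<sigma> f u)"

definition symmetrizer_kernel :: "(nat \<Rightarrow> nat \<Rightarrow> nat \<Rightarrow> nat \<Rightarrow> 'a::field) \<Rightarrow> nat \<Rightarrow> nat
    \<Rightarrow> (nat list \<Rightarrow> 'a) set" where
  "symmetrizer_kernel C n k =
     {f \<in> tensor_space n k. braided_symmetrizer C n k f = (\<lambda>_. 0)}"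

text \<open>dim B^k(U) = dim (U^{(x)k} / ker S_k) for k >= 2, and B^0 = k, B^1 = U.\<close>
definition nichols_component_dim :: "(nat \<Rightarrow> nat \<Rightarrow> nat \<Rightarrow> nat \<Rightarrow> 'a::field) \<Rightarrow> nat \<Rightarrow> nat \<Rightarrow> nat" where
  "nichols_component_dim C n k =
     (if k < 2 then vector_space.dim tscale (tensor_space n k :: (nat list \<Rightarrow> 'a) set)
      else vector_space.dim tscale (tensor_space n k :: (nat list \<Rightarrow> 'a) set)
           - vector_space.dim tscale (symmetrizer_kernel C n k))"

definition nichols_infinite_dimensional :: "(nat \<Rightarrow> nat \<Rightarrow> nat \<Rightarrow> nat \<Rightarrow> 'a::field) \<Rightarrow> nat \<Rightarrow> bool" where
  "nichols_infinite_dimensional C n \<longleftrightarrow>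
     (\<forall>D::nat. \<exists>N. D < (\<Sum>k<N. nichols_component_dim C n k))"

definition alg_closed_field :: "'a::field itself \<Rightarrow> bool" where
  "alg_closed_field _ \<longleftrightarrow> (\<forall>p :: 'a poly. degree p \<noteq> 0 \<longrightarrow> (\<exists>z. poly p z = 0))"

definition primitive_root :: "nat \<Rightarrow> 'a::field \<Rightarrow> bool" where
  "primitive_root n \<gamma> \<longleftrightarrow> \<gamma> ^ n = 1 \<and> (\<forall>m. 0 < m \<and> m < n \<longrightarrow> \<gamma> ^ m \<noteq> 1)"

definition root_of_unity :: "'a::field \<Rightarrow> bool" where
  "root_of_unity z \<longleftrightarrow> (\<exists>m>0. z ^ m = 1)"

end

theory Submission
  imports Defs
begin


abbreviation tr :: "nat \<Rightarrow> nat \<Rightarrow> nat" where "tr j \<equiv> Transposition.transpose j (Suc j)"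

fun Rw :: "nat list \<Rightarrow> nat \<Rightarrow> nat" where
  "Rw [] = id"
| "Rw (j # ws) = Rw ws \<circ> tr j"

fun good :: "nat list \<Rightarrow> bool" where
  "good [] = True"
| "good (j # ws) = (Rw ws j < Rw ws (Suc j) \<and> good ws)"

definition invset :: "nat \<Rightarrow> (nat \<Rightarrow> nat) \<Rightarrow> (nat \<times> nat) set" where
  "invset k Q = {(x, y). x < y \<and> y < k \<and> Q y < Q x}"

definition ninv :: "nat \<Rightarrow> (nat \<Rightarrow> nat) \<Rightarrow> nat" where
  "ninv k Q = card (invset k Q)"

lemma finite_invset: "finite (invset k Q)"
proof -
  have "invset k Q \<subseteq> {..<k} \<times> {..<k}" unfolding invset_def by auto
  then show ?thesis by (rule finite_subset) auto
qed

lemma tr_order: "x < y \<Longrightarrow> (x, y) \<noteq> (j, Suc j) \<Longrightarrow> tr j x < tr j y"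
  unfolding Transposition.transpose_def by auto

lemma tr_tr[simp]: "tr j (tr j x) = x"
  unfolding Transposition.transpose_def by auto

lemma tr_lt: "Suc j < k \<Longrightarrow> (tr j x < k) = (x < k)"
  unfolding Transposition.transpose_def by auto

lemma ninv_up:
  assumes jk: "Suc j < k" and lt: "Q j < Q (Suc j)"
  shows "ninv k (Q \<circ> tr j) = Suc (ninv k Q)"
proof -
  let ?phi = "\<lambda>(x, y). (tr j x, tr j y)"
  have eq: "invset k (Q \<circ> tr j) = insert (j, Suc j) (?phi ` invset k Q)"
  proof (rule set_eqI, rule iffI)
    fix z assume z: "z \<in> invset k (Q \<circ> tr j)"
    obtain x y where xy: "z = (x, y)" by (cases z)
    show "z \<in> insert (j, Suc j) (?phi ` invset k Q)"
    proof (cases "(x, y) = (j, Suc j)")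
      case True then show ?thesis using xy by simp
    next
      case False
      have "x < y" "y < k" "Q (tr j y) < Q (tr j x)" using z xy unfolding invset_def by auto
      then have "(tr j x, tr j y) \<in> invset k Q"
        using tr_order[OF \<open>x < y\<close> False] tr_lt[OF jk] unfolding invset_def by auto
      moreover have "z = ?phi (tr j x, tr j y)" using xy by simp
      ultimately show ?thesis by blast
    qed
  next
    fix z assume z: "z \<in> insert (j, Suc j) (?phi ` invset k Q)"
    show "z \<in> invset k (Q \<circ> tr j)"
    proof (cases "z = (j, Suc j)")
      case True then show ?thesis using lt jk unfolding invset_def
        by (simp add: Transposition.transpose_def)
    next
      case False
      then obtain x y where xy: "(x, y) \<in> invset k Q" "z = (tr j x, tr j y)" using z by auto
      have "x < y" "y < k" "Q y < Q x" using xy unfolding invset_def by auto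
      moreover have "(x, y) \<noteq> (j, Suc j)" using \<open>Q y < Q x\<close> lt by auto
      ultimately show ?thesis using xy tr_order tr_lt[OF jk] unfolding invset_def by auto
    qed
  qed
  have inj: "inj_on ?phi (invset k Q)"
    by (rule inj_onI) (auto, metis tr_tr, metis tr_tr)
  have nin: "(j, Suc j) \<notin> ?phi ` invset k Q"
  proof
    assume "(j, Suc j) \<in> ?phi ` invset k Q"
    then obtain x y where "(x, y) \<in> invset k Q" "tr j x = j" "tr j y = Suc j" by auto
    then show False unfolding invset_def Transposition.transpose_def by (auto split: if_splits)
  qed
  show ?thesis unfolding ninv_def eq
    using nin card_image[OF inj] finite_invset by simp
qed

lemma comp_tr_tr: "Q \<circ> tr j \<circ> tr j = Q"
  by (rule ext) simp

lemma ninv_down: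
  assumes jk: "Suc j < k" and lt: "Q (Suc j) < Q j"
  shows "ninv k Q = Suc (ninv k (Q \<circ> tr j))"
proof -
  have "(Q \<circ> tr j) j < (Q \<circ> tr j) (Suc j)" using lt by (simp add: Transposition.transpose_def)
  then have "ninv k (Q \<circ> tr j \<circ> tr j) = Suc (ninv k (Q \<circ> tr j))" by (rule ninv_up[OF jk])
  then show ?thesis by (simp only: comp_tr_tr)
qed

lemma Rw_permutes: "\<forall>j\<in>set ws. Suc j < k \<Longrightarrow> Rw ws permutes {..<k}"
proof (induction ws)
  case Nil then show ?case by (simp only: Rw.simps permutes_id)
next
  case (Cons j ws)
  have "tr j permutes {..<k}" using Cons.prems by (intro permutes_swap_id) auto
  moreover have "Rw ws permutes {..<k}" using Cons by simp
  ultimately show ?case by (metis Rw.simps(2) permutes_compose)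
qed

lemma ninv_le_good:
  "\<forall>j\<in>set ws. Suc j < k \<Longrightarrow> ninv k (Rw ws) \<le> length ws \<and> (ninv k (Rw ws) = length ws \<longrightarrow> good ws)"
proof (induction ws)
  case Nil
  have "invset k (Rw []) = {}" by (auto simp: invset_def)
  then have "ninv k (Rw []) = 0" unfolding ninv_def by (simp only: card.empty)
  then show ?case by (simp add: id_def)
next
  case (Cons j ws)
  have jk: "Suc j < k" using Cons.prems by simp
  have IH: "ninv k (Rw ws) \<le> length ws \<and> (ninv k (Rw ws) = length ws \<longrightarrow> good ws)"
    using Cons by simp
  have inj: "inj_on (Rw ws) {..<k}"
    using Rw_permutes[of ws k] Cons.prems permutes_inj_on by fastforce
  have ne: "Rw ws j \<noteq> Rw ws (Suc j)"
    using inj_onD[OF inj] jk by fastforce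
  show ?case
  proof (cases "Rw ws j < Rw ws (Suc j)")
    case True
    then show ?thesis using ninv_up[OF jk True] IH by (simp add: comp_def)
  next
    case False
    then have "Rw ws (Suc j) < Rw ws j" using ne by simp
    from ninv_down[OF jk this] IH show ?thesis by (simp add: comp_def)
  qed
qed

lemma strict_from_adj:
  fixes Q :: "nat \<Rightarrow> nat"
  assumes "\<And>j. Suc j < k \<Longrightarrow> Q j < Q (Suc j)"
  shows "x < y \<Longrightarrow> y < k \<Longrightarrow> Q x < Q y"
proof (induction y)
  case 0 then show ?case by simp
next
  case (Suc y)
  show ?case
  proof (cases "x = y")
    case True then show ?thesis using assms Suc.prems by simp
  next
    case False
    then have "Q x < Q y" using Suc by simp
    also have "Q y < Q (Suc y)" using assms Suc.prems by simp
    finally show ?thesis .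
  qed
qed

lemma strict_perm_id:
  fixes Q :: "nat \<Rightarrow> nat"
  assumes p: "Q permutes {..<k}" and mono: "\<And>x y. x < y \<Longrightarrow> y < k \<Longrightarrow> Q x < Q y"
  shows "Q = id"
proof -
  have "\<forall>x<k. Q x = x"
  proof (intro allI impI)
    fix x :: nat show "x < k \<Longrightarrow> Q x = x"
    proof (induction x rule: less_induct)
      case (less x)
      have ge: "x \<le> Q x"
      proof (rule ccontr)
        assume "\<not> x \<le> Q x"
        then have "Q x < x" by simp
        then have "Q (Q x) = Q x" using less by simp
        moreover have "inj Q" using p permutes_inj by blast
        ultimately have "Q x = x" by (meson injD)
        then show False using \<open>Q x < x\<close> by simp
      qed
      show "Q x = x"
      proof (rule ccontr)
        assume ne: "Q x \<noteq> x"
        have "x \<in> Q ` {..<k}" using less.prems permutes_image[OF p] by auto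
        then obtain x' where x': "x' < k" "Q x' = x" by auto
        show False
        proof (cases "x' < x")
          case True then show False using less x' ne by auto
        next
          case False
          then have "x' \<noteq> x" using x' ne by auto
          with False have "x < x'" by simp
          then have "Q x < Q x'" using mono[OF _ x'(1)] by blast
          then show False using ge x'(2) by linarith
        qed
      qed
    qed
  qed
  then show ?thesis using permutes_not_in[OF p] by (intro ext) (metis id_apply lessThan_iff)
qed

lemma exists_word:
  "Q permutes {..<k} \<Longrightarrow> \<exists>ws. (\<forall>j\<in>set ws. Suc j < k) \<and> Rw ws = Q \<and> length ws = ninv k Q"
proof (induction "ninv k Q" arbitrary: Q)
  case 0
  have inj: "inj_on Q {..<k}" using 0 permutes_inj_on by blast
  have "Q x < Q y" if "x < y" "y < k" for x y
  proof -
    have "(x, y) \<notin> invset k Q" using 0 finite_invset unfolding ninv_def by (metis card_0_eq empty_iff)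
    then have "Q x \<le> Q y" using that unfolding invset_def by auto
    moreover have "Q x \<noteq> Q y" using inj_onD[OF inj] that by fastforce
    ultimately show ?thesis by simp
  qed
  then have "Q = id" using strict_perm_id[OF 0(2)] by blast
  then show ?case using 0 by (intro exI[of _ "[]"]) simp
next
  case (Suc m)
  have inj: "inj_on Q {..<k}" using Suc permutes_inj_on by blast
  have "\<exists>j. Suc j < k \<and> Q (Suc j) < Q j"
  proof (rule ccontr)
    assume nex: "\<not> ?thesis"
    have adj: "Q j < Q (Suc j)" if "Suc j < k" for j
    proof -
      have "\<not> Q (Suc j) < Q j" using that nex by blast
      moreover have "Q j \<noteq> Q (Suc j)" using inj_onD[OF inj, of j "Suc j"] that by auto
      ultimately show ?thesis by simp
    qed
    have "invset k Q = {}" unfolding invset_def using strict_from_adj[of k Q, OF adj]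
      by auto (meson order.asym)
    then show False using Suc(2) unfolding ninv_def by simp
  qed
  then obtain j where j: "Suc j < k" "Q (Suc j) < Q j" by blast
  have n: "ninv k Q = Suc (ninv k (Q \<circ> tr j))" using ninv_down[OF j] .
  have pQ: "Q \<circ> tr j permutes {..<k}"
    using Suc(3) j by (intro permutes_compose permutes_swap_id) auto
  obtain ws where ws: "\<forall>j\<in>set ws. Suc j < k" "Rw ws = Q \<circ> tr j" "length ws = ninv k (Q \<circ> tr j)"
    using Suc(1)[of "Q \<circ> tr j"] Suc(2) n pQ by auto
  show ?case
    using ws j n by (intro exI[of _ "j # ws"]) (simp add: comp_tr_tr)
qed

lemma perm_of_word_Cons: "perm_of_word (j # ws) = tr j \<circ> perm_of_word ws"
  by (simp add: perm_of_word_def)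

lemma perm_Rw: "perm_of_word ws \<circ> Rw ws = id \<and> Rw ws \<circ> perm_of_word ws = id"
proof (induction ws)
  case Nil then show ?case by (simp add: perm_of_word_def)
next
  case (Cons j ws)
  have h1: "\<And>x. perm_of_word ws (Rw ws x) = x" and h2: "\<And>x. Rw ws (perm_of_word ws x) = x"
    using Cons.IH by (metis comp_apply id_apply)+
  show ?case by (auto simp: perm_of_word_Cons fun_eq_iff h1 h2)
qed

lemma reduced_props:
  assumes p: "\<sigma> permutes {..<k}"
  shows "\<exists>ws. reduced_word k \<sigma> ws"
    and "reduced_word k \<sigma> ws \<Longrightarrow> good ws \<and> length ws = ninv k (inv \<sigma>) \<and> Rw ws = inv \<sigma>"
proof -
  have pi: "inv \<sigma> permutes {..<k}" using permutes_inv[OF p] .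
  obtain ws0 where ws0: "\<forall>j\<in>set ws0. Suc j < k" "Rw ws0 = inv \<sigma>" "length ws0 = ninv k (inv \<sigma>)"
    using exists_word[OF pi] by blast
  have "perm_of_word ws0 = perm_of_word ws0 \<circ> (inv \<sigma> \<circ> \<sigma>)"
    using permutes_inv_o(2)[OF p] by simp
  also have "\<dots> = (perm_of_word ws0 \<circ> Rw ws0) \<circ> \<sigma>" using ws0 by (simp add: comp_assoc)
  also have "\<dots> = \<sigma>" using perm_Rw[of ws0] by simp
  finally have P0: "perm_of_word ws0 = \<sigma>" .
  let ?P = "\<lambda>ws. (\<forall>j\<in>set ws. Suc j < k) \<and> perm_of_word ws = \<sigma>"
  have "?P ws0" using ws0 P0 by simp
  from ex_has_least_nat[of ?P ws0 length, OF this]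
  obtain ws1 where "?P ws1" "\<forall>y. ?P y \<longrightarrow> length ws1 \<le> length y" by blast
  then show "\<exists>ws. reduced_word k \<sigma> ws" unfolding reduced_word_def by blast
  assume r: "reduced_word k \<sigma> ws"
  have rs: "\<forall>j\<in>set ws. Suc j < k" "perm_of_word ws = \<sigma>" "length ws \<le> length ws0"
    using r ws0 P0 unfolding reduced_word_def by auto
  have "Rw ws = Rw ws \<circ> (\<sigma> \<circ> inv \<sigma>)" using permutes_inv_o(1)[OF p] by simp
  also have "\<dots> = (Rw ws \<circ> perm_of_word ws) \<circ> inv \<sigma>" using rs by (simp add: comp_assoc)
  also have "\<dots> = inv \<sigma>" using perm_Rw[of ws] by simp
  finally have R: "Rw ws = inv \<sigma>" .
  have "ninv k (Rw ws) \<le> length ws" "ninv k (Rw ws) = length ws \<longrightarrow> good ws"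
    using ninv_le_good[OF rs(1)] by auto
  then show "good ws \<and> length ws = ninv k (inv \<sigma>) \<and> Rw ws = inv \<sigma>"
    using R rs(3) ws0(3) by auto
qed



definition cyc :: "nat \<Rightarrow> nat \<Rightarrow> nat \<Rightarrow> nat" where
  "cyc k p v = (if v < p then v else if v < k then Suc v else if v = k then p else v)"
definition dcy :: "nat \<Rightarrow> nat \<Rightarrow> nat \<Rightarrow> nat" where
  "dcy k p v = (if v < p then v else if v = p then k else if v \<le> k then v - 1 else v)"

lemma dcy_cyc: "p \<le> k \<Longrightarrow> dcy k p (cyc k p v) = v"
  unfolding cyc_def dcy_def by auto
lemma cyc_dcy: "p \<le> k \<Longrightarrow> cyc k p (dcy k p v) = v"
  unfolding cyc_def dcy_def by auto

lemma cyc_permutes: "p \<le> k \<Longrightarrow> cyc k p permutes {..<Suc k}"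
  apply (rule bij_imp_permutes)
   apply (rule bij_betw_byWitness[where f'="dcy k p"])
  by (auto simp: dcy_cyc cyc_dcy) (auto simp: cyc_def dcy_def)

lemma dcy_permutes: "p \<le> k \<Longrightarrow> dcy k p permutes {..<Suc k}"
  apply (rule bij_imp_permutes)
   apply (rule bij_betw_byWitness[where f'="cyc k p"])
  by (auto simp: dcy_cyc cyc_dcy) (auto simp: cyc_def dcy_def)

definition gf :: "nat \<Rightarrow> 'a::comm_ring_1 \<Rightarrow> 'a" where
  "gf k q = (\<Sum>\<sigma>\<in>{\<sigma>. \<sigma> permutes {..<k}}. q ^ ninv k \<sigma>)"

lemma ninv_cyc:
  assumes pk: "p \<le> k" and t: "\<tau> permutes {..<k}"
  shows "ninv (Suc k) (cyc k p \<circ> \<tau>) = ninv k \<tau> + (k - p)"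
proof -
  have tk: "\<tau> x < k \<longleftrightarrow> x < k" for x using permutes_in_image[OF t] by simp
  have tK: "\<tau> k = k" using permutes_not_in[OF t] by simp
  let ?A = "{x. x < k \<and> p \<le> \<tau> x}"
  have eq: "invset (Suc k) (cyc k p \<circ> \<tau>) = invset k \<tau> \<union> (\<lambda>x. (x, k)) ` ?A"
  proof (rule set_eqI)
    fix z :: "nat \<times> nat"
    obtain x y where z: "z = (x, y)" by (cases z)
    show "z \<in> invset (Suc k) (cyc k p \<circ> \<tau>) \<longleftrightarrow> z \<in> invset k \<tau> \<union> (\<lambda>x. (x, k)) ` ?A"
    proof (cases "y < k")
      case True
      then show ?thesis using z tk[of x] tk[of y] unfolding invset_def cyc_def by auto
    next
      case False
      show ?thesis
      proof (cases "y = k")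
        case True
        have ck: "(cyc k p \<circ> \<tau>) k = p" using tK pk unfolding cyc_def by simp
        have L: "z \<in> invset (Suc k) (cyc k p \<circ> \<tau>) \<longleftrightarrow> x < k \<and> p < cyc k p (\<tau> x)"
          using z True ck unfolding invset_def by auto
        have R: "z \<in> invset k \<tau> \<union> (\<lambda>x. (x, k)) ` ?A \<longleftrightarrow> x < k \<and> p \<le> \<tau> x"
          using z True unfolding invset_def by auto
        have "x < k \<Longrightarrow> (p < cyc k p (\<tau> x)) = (p \<le> \<tau> x)"
          using tk[of x] unfolding cyc_def by auto
        then show ?thesis using L R by blast
      next
        case False
        then show ?thesis using \<open>\<not> y < k\<close> z unfolding invset_def by auto
      qed
    qed
  qed
  have disj: "invset k \<tau> \<inter> (\<lambda>x. (x, k)) ` ?A = {}" unfolding invset_def by auto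
  have "\<tau> ` ?A = {p..<k}"
  proof
    show "\<tau> ` ?A \<subseteq> {p..<k}"
    proof
      fix v assume "v \<in> \<tau> ` ?A"
      then obtain x where x: "x < k" "p \<le> \<tau> x" "v = \<tau> x" by blast
      have "\<tau> x < k" using tk[of x] x(1) by blast
      then show "v \<in> {p..<k}" using x by simp
    qed
    show "{p..<k} \<subseteq> \<tau> ` ?A"
    proof
      fix v assume v: "v \<in> {p..<k}"
      then have "v \<in> \<tau> ` {..<k}" using permutes_image[OF t] by simp
      then obtain x where x: "x < k" "\<tau> x = v" by blast
      then have "x \<in> ?A" using v by simp
      then show "v \<in> \<tau> ` ?A" using x(2) by blast
    qed
  qed
  moreover have "inj_on \<tau> ?A" by (rule permutes_inj_on[OF t])
  ultimately have cA: "card ?A = k - p"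
    using card_image[of \<tau> ?A] by simp
  have fA: "finite ?A" by auto
  have "card ((\<lambda>x. (x, k)) ` ?A) = card ?A" by (rule card_image) (auto intro: inj_onI)
  then show ?thesis unfolding ninv_def eq
    using card_Un_disjoint[OF finite_invset _ disj] fA cA by simp
qed

lemma gf_Suc: "gf (Suc k) q = (\<Sum>p\<le>k. q ^ (k - p)) * gf k q"
proof -
  let ?S = "{..k} \<times> {\<tau>. \<tau> permutes {..<k}}"
  let ?T = "{\<sigma>. \<sigma> permutes {..<Suc k}}"
  let ?F = "\<lambda>(p, \<tau>). cyc k p \<circ> \<tau>"
  let ?G = "\<lambda>\<sigma>. (\<sigma> k, dcy k (\<sigma> k) \<circ> \<sigma>)"
  have E1: "(\<Sum>(p, \<tau>)\<in>?S. q ^ (ninv k \<tau> + (k - p))) = (\<Sum>\<sigma>\<in>?T. q ^ ninv (Suc k) \<sigma>)"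
  proof (rule sum.reindex_bij_witness[where i="?G" and j="?F"])
    fix a assume a: "a \<in> ?S"
    obtain p \<tau> where pt: "a = (p, \<tau>)" by (cases a)
    have pk: "p \<le> k" and t: "\<tau> permutes {..<k}" using a pt by auto
    have tK: "\<tau> k = k" using permutes_not_in[OF t] by simp
    have ts: "\<tau> permutes {..<Suc k}" using permutes_subset[OF t] by auto
    have c: "cyc k p k = p" unfolding cyc_def using pk by auto
    show "?G (?F a) = a" using pt tK c pk by (auto simp: fun_eq_iff dcy_cyc)
    show "?F a \<in> ?T" using pt permutes_compose[OF ts cyc_permutes[OF pk]] by simp
    show "q ^ ninv (Suc k) (?F a) = (case a of (p, \<tau>) \<Rightarrow> q ^ (ninv k \<tau> + (k - p)))"
      using pt ninv_cyc[OF pk t] by simp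
  next
    fix b assume b: "b \<in> ?T"
    then have s: "b permutes {..<Suc k}" by simp
    have bk: "b k \<le> k" using permutes_in_image[OF s, of k] by simp
    show "?F (?G b) = b" using bk by (auto simp: fun_eq_iff cyc_dcy)
    have "dcy k (b k) \<circ> b permutes {..<Suc k}"
      using permutes_compose[OF s dcy_permutes[OF bk]] .
    moreover have "(dcy k (b k) \<circ> b) k = k" unfolding dcy_def by simp
    then have "\<And>x. x \<in> {..<Suc k} - {..<k} \<Longrightarrow> (dcy k (b k) \<circ> b) x = x" by auto
    ultimately have "dcy k (b k) \<circ> b permutes {..<k}"
      by (rule permutes_superset)
    then show "?G b \<in> ?S" using bk by simp
  qed
  have "gf (Suc k) q = (\<Sum>(p, \<tau>)\<in>?S. q ^ (ninv k \<tau> + (k - p)))"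
    unfolding gf_def E1 ..
  also have "\<dots> = (\<Sum>p\<le>k. \<Sum>\<tau>\<in>{\<tau>. \<tau> permutes {..<k}}. q ^ ninv k \<tau> * q ^ (k - p))"
    by (simp only: sum.cartesian_product[symmetric] power_add)
  also have "\<dots> = (\<Sum>p\<le>k. gf k q * q ^ (k - p))"
    by (simp only: gf_def sum_distrib_right)
  also have "\<dots> = gf k q * (\<Sum>p\<le>k. q ^ (k - p))"
    by (simp only: sum_distrib_left)
  finally show ?thesis by (simp only: mult.commute)
qed

lemma flip_sum: "(\<Sum>p\<le>k. (q::'a::comm_ring_1) ^ (k - p)) = (\<Sum>p\<le>k. q ^ p)"
  by (rule sum.reindex_bij_witness[where i="\<lambda>p. k - p" and j="\<lambda>p. k - p"]) auto

lemma gf_nonzero: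
  fixes q :: "'a::field_char_0"
  assumes "q = 1 \<or> \<not> root_of_unity q"
  shows "gf k q \<noteq> 0"
proof (induction k)
  case 0
  have "{\<sigma>. \<sigma> permutes ({..<0::nat})} = {id}" by (auto simp: permutes_empty)
  moreover have "ninv 0 id = 0" unfolding ninv_def invset_def by simp
  ultimately show ?case by (simp add: gf_def)
next
  case (Suc k)
  have "(\<Sum>p\<le>k. q ^ p) \<noteq> 0"
  proof (cases "q = 1")
    case True then show ?thesis by (simp, metis add.commute of_nat_Suc of_nat_neq_0)
  next
    case False
    then have nr: "\<not> root_of_unity q" using assms by simp
    have "(1 - q) * (\<Sum>p\<le>k. q ^ p) = 1 - q ^ Suc k" by (rule sum_gp_basic)
    moreover have "q ^ Suc k \<noteq> 1" using nr unfolding root_of_unity_def by blast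
    ultimately show ?thesis by auto
  qed
  moreover have "gf (Suc k) q = (\<Sum>p\<le>k. q ^ p) * gf k q" by (simp only: gf_Suc flip_sum)
  ultimately show ?case using Suc by simp
qed



definition bnd :: "nat \<Rightarrow> (nat \<Rightarrow> nat \<Rightarrow> 'a::zero) \<Rightarrow> bool" where
  "bnd d M \<longleftrightarrow> (\<forall>p q. M p q \<noteq> 0 \<longrightarrow> p \<le> q + d)"

lemma bnd_mult:
  assumes "bnd d1 (A :: nat \<Rightarrow> nat \<Rightarrow> 'a::field)" "bnd d2 B"
  shows "bnd (d1 + d2) (mat_mult n A B)"
  unfolding bnd_def
proof (intro allI impI)
  fix p q assume "mat_mult n A B p q \<noteq> 0"
  then have "(\<Sum>j<n. A p j * B j q) \<noteq> 0" by (simp add: mat_mult_def)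
  then obtain j where "A p j * B j q \<noteq> 0" by (meson sum.not_neutral_contains_not_neutral)
  then have "A p j \<noteq> 0" "B j q \<noteq> 0" by auto
  then have "p \<le> j + d1" "j \<le> q + d2" using assms unfolding bnd_def by blast+
  then show "p \<le> q + (d1 + d2)" by simp
qed

lemma bnd_add: "bnd d A \<Longrightarrow> bnd d B \<Longrightarrow> bnd d (A + (B :: nat \<Rightarrow> nat \<Rightarrow> 'a::field))"
  unfolding bnd_def by (metis add.right_neutral plus_fun_apply)

lemma bnd_scal: "bnd d A \<Longrightarrow> bnd d (mat_scal c (A :: nat \<Rightarrow> nat \<Rightarrow> 'a::field))"
  unfolding bnd_def mat_scal_def by simp

lemma bnd_mono: "bnd d A \<Longrightarrow> d \<le> d' \<Longrightarrow> bnd d' A"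
  unfolding bnd_def by fastforce

lemma bnd_y: "bnd 1 (rho_y n \<beta>)"
  unfolding bnd_def rho_y_def by auto

lemma bnd_gpow: "bnd 0 (rho_g_pow n \<gamma> \<beta> j)"
  unfolding bnd_def rho_g_pow_def by auto

lemma bnd_Sg: "bnd 0 (rho_Sg n \<gamma> \<beta>)"
  unfolding rho_Sg_def by (rule bnd_gpow)

lemma bnd_Sy: "bnd 1 (rho_Sy n \<gamma> \<beta>)"
  unfolding rho_Sy_def using bnd_scal bnd_mult[OF bnd_y bnd_Sg] by fastforce

lemma bnd_base: "bnd 0 (rho_base n \<gamma> \<alpha> \<beta> r i)"
proof -
  have "bnd 0 (mat_scal (\<alpha> powi r) (\<lambda>p q. if p = q then 1 else 0))"
    unfolding bnd_def mat_scal_def by auto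
  from bnd_mult[OF this bnd_gpow] show ?thesis unfolding rho_base_def by simp
qed

lemma bnd_cmat: "l \<le> k \<Longrightarrow> bnd (k - l) (cmat n \<gamma> \<alpha> \<beta> r i k l)"
proof (induction k arbitrary: l)
  case 0 then show ?case using bnd_base by simp
next
  case (Suc k)
  show ?case
  proof (cases "l = 0")
    case True
    have a: "bnd (k + 1) (mat_mult n (cmat n \<gamma> \<alpha> \<beta> r i k 0) (rho_Sy n \<gamma> \<beta>))"
      using bnd_mult[OF Suc.IH[of 0] bnd_Sy] by simp
    have b: "bnd (1 + k + 0) (mat_mult n (mat_mult n (rho_y n \<beta>) (cmat n \<gamma> \<alpha> \<beta> r i k 0)) (rho_Sg n \<gamma> \<beta>))"
      using bnd_mult[OF bnd_mult[OF bnd_y Suc.IH[of 0]] bnd_Sg] by simp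
    have a': "bnd (Suc k) (mat_mult n (cmat n \<gamma> \<alpha> \<beta> r i k 0) (rho_Sy n \<gamma> \<beta>))"
      by (rule bnd_mono[OF a]) simp
    have b': "bnd (Suc k) (mat_mult n (mat_mult n (rho_y n \<beta>) (cmat n \<gamma> \<alpha> \<beta> r i k 0)) (rho_Sg n \<gamma> \<beta>))"
      by (rule bnd_mono[OF b]) simp
    have eqn: "cmat n \<gamma> \<alpha> \<beta> r i (Suc k) 0 = mat_mult n (cmat n \<gamma> \<alpha> \<beta> r i k 0) (rho_Sy n \<gamma> \<beta>)
        + mat_scal \<beta> (mat_mult n (mat_mult n (rho_y n \<beta>) (cmat n \<gamma> \<alpha> \<beta> r i k 0)) (rho_Sg n \<gamma> \<beta>))"
      by simp
    show ?thesis unfolding True eqn diff_zero by (rule bnd_add[OF a' bnd_scal[OF b']])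
  next
    case False
    show ?thesis
    proof (cases "l < Suc k")
      case True
      have lk: "l \<le> k" "l - 1 \<le> k" using True by auto
      have a: "bnd (k - l + 1) (mat_mult n (cmat n \<gamma> \<alpha> \<beta> r i k l) (rho_Sy n \<gamma> \<beta>))"
        using bnd_mult[OF Suc.IH[OF lk(1)] bnd_Sy] by simp
      have b: "bnd (1 + (k - l) + 0) (mat_mult n (mat_mult n (rho_y n \<beta>) (cmat n \<gamma> \<alpha> \<beta> r i k l)) (rho_Sg n \<gamma> \<beta>))"
        using bnd_mult[OF bnd_mult[OF bnd_y Suc.IH[OF lk(1)]] bnd_Sg] .
      have c: "bnd (k - (l - 1) + 0) (mat_mult n (cmat n \<gamma> \<alpha> \<beta> r i k (l - 1)) (rho_Sg n \<gamma> \<beta>))"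
        using bnd_mult[OF Suc.IH[OF lk(2)] bnd_Sg] .
      have e: "Suc k - l = k - l + 1" "k - (l - 1) + 0 = k - l + 1" "1 + (k - l) + 0 = k - l + 1"
        using True False by auto
      have eqn: "cmat n \<gamma> \<alpha> \<beta> r i (Suc k) l =
        mat_mult n (cmat n \<gamma> \<alpha> \<beta> r i k l) (rho_Sy n \<gamma> \<beta>)
        + mat_scal (\<beta> * inverse (\<gamma> ^ l))
            (mat_mult n (mat_mult n (rho_y n \<beta>) (cmat n \<gamma> \<alpha> \<beta> r i k l)) (rho_Sg n \<gamma> \<beta>))
        + mat_mult n (cmat n \<gamma> \<alpha> \<beta> r i k (l - 1)) (rho_Sg n \<gamma> \<beta>)"
        using True False by simp
      show ?thesis unfolding eqn e(1)
        by (rule bnd_add[OF bnd_add[OF a bnd_scal[OF b[unfolded e(3)]]] c[unfolded e(2)]])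
    next
      case False2: False
      then have "l = Suc k" using Suc.prems by simp
      then show ?thesis using bnd_mult[OF Suc.IH[of k] bnd_Sg] by simp
    qed
  qed
qed

lemma cmat_diag:
  fixes \<gamma> \<alpha> \<beta> :: "'a::field"
  assumes b0: "\<beta> \<noteq> 0" and g0: "\<gamma> \<noteq> 0"
  shows "cmat n \<gamma> \<alpha> \<beta> r i k k = (\<lambda>p q. if p = q \<and> p < n then \<alpha> powi r * (\<beta> * inverse (\<gamma> ^ p)) powi (i - int k) else 0)"
proof (induction k)
  case 0
  show ?case
  proof (intro ext)
    fix p q
    have "(\<Sum>j<n. \<alpha> powi r * (if p = j then 1 else 0) * (if j = q then (\<beta> * inverse (\<gamma> ^ j)) powi i else 0))
        = (\<Sum>j<n. if j = p then (if p = q then \<alpha> powi r * (\<beta> * inverse (\<gamma> ^ p)) powi i else 0) else 0)"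
      by (rule sum.cong) auto
    also have "\<dots> = (if p = q \<and> p < n then \<alpha> powi r * (\<beta> * inverse (\<gamma> ^ p)) powi i else 0)"
      by simp
    finally show "cmat n \<gamma> \<alpha> \<beta> r i 0 0 p q = (if p = q \<and> p < n then \<alpha> powi r * (\<beta> * inverse (\<gamma> ^ p)) powi (i - int 0) else 0)"
      by (simp add: rho_base_def mat_mult_def mat_scal_def rho_g_pow_def)
  qed
next
  case (Suc k)
  show ?case
  proof (intro ext)
    fix p q
    let ?d = "\<beta> * inverse (\<gamma> ^ p)"
    have d0: "?d \<noteq> 0" using b0 g0 by simp
    have "cmat n \<gamma> \<alpha> \<beta> r i (Suc k) (Suc k) = mat_mult n (cmat n \<gamma> \<alpha> \<beta> r i k k) (rho_Sg n \<gamma> \<beta>)"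
      by simp
    then have "cmat n \<gamma> \<alpha> \<beta> r i (Suc k) (Suc k) p q
       = (\<Sum>j<n. (if p = j \<and> p < n then \<alpha> powi r * ?d powi (i - int k) else 0) * (if j = q then (\<beta> * inverse (\<gamma> ^ j)) powi (-1) else 0))"
      by (simp add: mat_mult_def Suc.IH rho_Sg_def rho_g_pow_def)
    also have "\<dots> = (\<Sum>j<n. if j = p then (if p = q \<and> p < n then \<alpha> powi r * ?d powi (i - int k) * ?d powi (-1) else 0) else 0)"
      by (rule sum.cong) auto
    also have "\<dots> = (if p = q \<and> p < n then \<alpha> powi r * ?d powi (i - int k) * ?d powi (-1) else 0)"
      by simp
    finally have cm: "cmat n \<gamma> \<alpha> \<beta> r i (Suc k) (Suc k) p q = (if p = q \<and> p < n then \<alpha> powi r * ?d powi (i - int k) * ?d powi (-1) else 0)" .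
    have pw1: "?d powi (i - int k) * ?d powi (-1) = ?d powi (i - int k + (-1))"
      by (rule power_int_add[symmetric]) (use d0 in blast)
    have pw2: "i - int k + (-1) = i - int (Suc k)" by simp
    show "cmat n \<gamma> \<alpha> \<beta> r i (Suc k) (Suc k) p q = (if p = q \<and> p < n then \<alpha> powi r * ?d powi (i - int (Suc k)) else 0)"
      unfolding cm by (simp only: mult.assoc pw1 pw2)
  qed
qed

lemma braid_H1:
  "braid_coef n \<gamma> \<alpha> \<beta> r i a b p l \<noteq> 0 \<Longrightarrow> l \<le> a \<and> p + l \<le> a + b"
proof -
  assume nz: "braid_coef n \<gamma> \<alpha> \<beta> r i a b p l \<noteq> 0"
  then have la: "l \<le> a" unfolding braid_coef_def by (simp split: if_splits)
  then have "cmat n \<gamma> \<alpha> \<beta> r i a l p b \<noteq> 0" using nz unfolding braid_coef_def by simp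
  then have "p \<le> b + (a - l)" using bnd_cmat[OF la, of n \<gamma> \<alpha> \<beta> r i] unfolding bnd_def by blast
  then show ?thesis using la by simp
qed

lemma braid_H2:
  fixes \<gamma> \<alpha> \<beta> :: "'a::field"
  assumes "\<beta> \<noteq> 0" "\<gamma> \<noteq> 0" "m < n"
  shows "braid_coef n \<gamma> \<alpha> \<beta> r i m m m m = \<alpha> powi r * (\<beta> * inverse (\<gamma> ^ m)) powi (i - int m)"
  unfolding braid_coef_def using cmat_diag[OF assms(1,2)] assms(3) by simp



definition eM :: "nat \<Rightarrow> nat \<Rightarrow> nat list \<Rightarrow> 'a::field" where
  "eM k m = (\<lambda>u. if u = replicate k m then 1 else 0)"

definition Phi :: "nat \<Rightarrow> (nat \<Rightarrow> nat) \<Rightarrow> nat list \<Rightarrow> nat \<Rightarrow> int" where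
  "Phi k R v t = (\<Sum>p<k. if R p \<le> t then int (v ! p) else 0)"

lemma two_point:
  fixes f g :: "nat \<Rightarrow> int"
  assumes jk: "Suc j < k" and eq: "\<And>p. p < k \<Longrightarrow> p \<noteq> j \<Longrightarrow> p \<noteq> Suc j \<Longrightarrow> f p = g p"
  shows "(\<Sum>p<k. f p) = (\<Sum>p<k. g p) - g j - g (Suc j) + f j + f (Suc j)"
proof -
  have split: "(\<Sum>p<k. h p) = h j + h (Suc j) + (\<Sum>p\<in>{..<k} - {j} - {Suc j}. h p)" for h :: "nat \<Rightarrow> int"
  proof -
    have "(\<Sum>p<k. h p) = h j + (\<Sum>p\<in>{..<k} - {j}. h p)"
      by (rule sum.remove) (use jk in auto)
    also have "(\<Sum>p\<in>{..<k} - {j}. h p) = h (Suc j) + (\<Sum>p\<in>{..<k} - {j} - {Suc j}. h p)"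
      by (rule sum.remove) (use jk in auto)
    finally show ?thesis by simp
  qed
  have "(\<Sum>p\<in>{..<k} - {j} - {Suc j}. f p) = (\<Sum>p\<in>{..<k} - {j} - {Suc j}. g p)"
    by (rule sum.cong) (auto intro: eq)
  then show ?thesis using split[of f] split[of g] by simp
qed

lemma Phi_swap:
  assumes jk: "Suc j < k" and lv: "length v = k"
    and w: "w = v[j := a, Suc j := b]"
  shows "Phi k (R \<circ> tr j) v t = Phi k R w t + (if R j \<le> t then int (v ! Suc j) - int a else 0)
           + (if R (Suc j) \<le> t then int (v ! j) - int b else 0)"
proof -
  let ?g = "\<lambda>p. if R p \<le> t then int (v ! (tr j p)) else 0"
  let ?h = "\<lambda>p. if R p \<le> t then int (w ! p) else 0"
  have tp: "tr j permutes {..<k}" using jk by (intro permutes_swap_id) auto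
  have "Phi k (R \<circ> tr j) v t = (\<Sum>p<k. (?g \<circ> tr j) p)"
    unfolding Phi_def by (rule sum.cong) (simp_all add: Transposition.transpose_def)
  also have "\<dots> = (\<Sum>p<k. ?g p)"
    using sum.permute[OF tp, of ?g] by simp
  also have "\<dots> = (\<Sum>p<k. ?h p) - ?h j - ?h (Suc j) + ?g j + ?g (Suc j)"
  proof (rule two_point[OF jk])
    fix p assume "p < k" "p \<noteq> j" "p \<noteq> Suc j"
    then show "?g p = ?h p" using w lv by (simp add: Transposition.transpose_def)
  qed
  also have "?h j = (if R j \<le> t then int a else 0)" using w lv jk by simp
  also have "?h (Suc j) = (if R (Suc j) \<le> t then int b else 0)" using w lv jk by simp
  also have "?g j = (if R j \<le> t then int (v ! Suc j) else 0)" by (simp add: Transposition.transpose_def)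
  also have "?g (Suc j) = (if R (Suc j) \<le> t then int (v ! j) else 0)" by (simp add: Transposition.transpose_def)
  finally show ?thesis unfolding Phi_def by simp
qed

lemma Phi_update:
  assumes jk: "Suc j < k"
  shows "Phi k R ((replicate k m)[j := a, Suc j := b]) t = Phi k R (replicate k m) t
      + (if R j \<le> t then int a - int m else 0) + (if R (Suc j) \<le> t then int b - int m else 0)"
proof -
  let ?w = "(replicate k m)[j := a, Suc j := b]"
  let ?f = "\<lambda>p. if R p \<le> t then int (?w ! p) else 0"
  let ?g = "\<lambda>p. if R p \<le> t then int (replicate k m ! p) else 0"
  have "(\<Sum>p<k. ?f p) = (\<Sum>p<k. ?g p) - ?g j - ?g (Suc j) + ?f j + ?f (Suc j)"
    by (rule two_point[OF jk]) simp
  then show ?thesis unfolding Phi_def using jk by simp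
qed

lemma Phi_M:
  assumes R: "R permutes {..<k}" and t: "t < k"
  shows "Phi k R (replicate k m) t = int ((t + 1) * m)"
proof -
  let ?A = "{p \<in> {..<k}. R p \<le> t}"
  have "R ` ?A = {..t}"
  proof
    show "R ` ?A \<subseteq> {..t}" by blast
    show "{..t} \<subseteq> R ` ?A"
    proof
      fix v assume v: "v \<in> {..t}"
      then have "v \<in> R ` {..<k}" using permutes_image[OF R] t by simp
      then obtain x where x: "x < k" "R x = v" by blast
      then have "x \<in> ?A" using v by simp
      then show "v \<in> R ` ?A" using x(2) by blast
    qed
  qed
  moreover have "inj_on R ?A" by (rule permutes_inj_on[OF R])
  ultimately have cA: "card ?A = t + 1" using card_image[of R ?A] by simp
  have "Phi k R (replicate k m) t = (\<Sum>p<k. if R p \<le> t then int m else 0)"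
    unfolding Phi_def by (rule sum.cong) auto
  also have "\<dots> = (\<Sum>p\<in>?A. int m)"
    by (subst sum.inter_filter) simp_all
  also have "\<dots> = int (card ?A) * int m" by simp
  finally show ?thesis using cA by (simp add: algebra_simps)
qed

lemma word_op_Cons: "word_op C n k (j # ws) = braid_op C n k j \<circ> word_op C n k ws"
  by (simp add: word_op_def)

lemma word_op_Nil: "word_op C n k [] = id"
  by (simp add: word_op_def)

lemma replicate_words: "m < n \<Longrightarrow> replicate k m \<in> words n k"
  unfolding words_def by auto

lemma strand:
  fixes C :: "nat \<Rightarrow> nat \<Rightarrow> nat \<Rightarrow> nat \<Rightarrow> 'a::field"
  assumes H1: "\<And>a b p l. C a b p l \<noteq> 0 \<Longrightarrow> l \<le> a \<and> p + l \<le> a + b"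
    and H2: "C m m m m = q" and mn: "m < n"
  shows "(\<forall>j\<in>set ws. Suc j < k) \<Longrightarrow> good ws \<Longrightarrow>
    (\<forall>v. word_op C n k ws (eM k m) v \<noteq> 0 \<longrightarrow> (\<forall>t<k. Phi k (Rw ws) v t \<le> int ((t + 1) * m)))
    \<and> word_op C n k ws (eM k m) (replicate k m) = q ^ length ws"
proof (induction ws)
  case Nil
  have "Phi k (\<lambda>a. a) (replicate k m) t \<le> int ((t + 1) * m)" if "t < k" for t
    using Phi_M[OF permutes_id that] by (simp add: id_def)
  then show ?case by (auto simp: word_op_Nil eM_def)
next
  case (Cons j ws)
  let ?M = "replicate k m"
  let ?G = "word_op C n k ws (eM k m)"
  let ?R = "Rw ws"
  have jk: "Suc j < k" and wsk: "\<forall>j\<in>set ws. Suc j < k" using Cons.prems by auto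
  have xy: "?R j < ?R (Suc j)" and gw: "good ws" using Cons.prems by auto
  have Rp: "?R permutes {..<k}" using Rw_permutes[OF wsk] .
  have xk: "?R j < k" "?R (Suc j) < k" using permutes_in_image[OF Rp] jk by auto
  have IH1: "\<And>v t. ?G v \<noteq> 0 \<Longrightarrow> t < k \<Longrightarrow> Phi k ?R v t \<le> int ((t + 1) * m)"
    and IH2: "?G ?M = q ^ length ws" using Cons.IH[OF wsk gw] by auto
  have WO: "word_op C n k (j # ws) (eM k m) = braid_op C n k j ?G"
    by (simp add: word_op_Cons)
  have part1: "Phi k (Rw (j # ws)) v t \<le> int ((t + 1) * m)"
    if nz: "word_op C n k (j # ws) (eM k m) v \<noteq> 0" and t: "t < k" for v t
  proof -
    have nz2: "braid_op C n k j ?G v \<noteq> 0" using nz WO by simp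
    then have vw: "v \<in> words n k" unfolding braid_op_def by (simp split: if_splits)
    then have lv: "length v = k" unfolding words_def by simp
    have "(\<Sum>a<n. \<Sum>b<n. ?G (v[j := a, Suc j := b]) * C a b (v ! j) (v ! Suc j)) \<noteq> 0"
      using nz2 vw unfolding braid_op_def by simp
    then obtain a where "(\<Sum>b<n. ?G (v[j := a, Suc j := b]) * C a b (v ! j) (v ! Suc j)) \<noteq> 0"
      by (meson sum.not_neutral_contains_not_neutral)
    then obtain b where "?G (v[j := a, Suc j := b]) * C a b (v ! j) (v ! Suc j) \<noteq> 0"
      by (meson sum.not_neutral_contains_not_neutral)
    then have g: "?G (v[j := a, Suc j := b]) \<noteq> 0" and c: "C a b (v ! j) (v ! Suc j) \<noteq> 0" by auto
    have h: "v ! Suc j \<le> a" "v ! j + v ! Suc j \<le> a + b" using H1[OF c] by auto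
    have ph: "Phi k ?R (v[j := a, Suc j := b]) t \<le> int ((t + 1) * m)" using IH1[OF g t] .
    have sw: "Phi k (?R \<circ> tr j) v t = Phi k ?R (v[j := a, Suc j := b]) t
        + (if ?R j \<le> t then int (v ! Suc j) - int a else 0)
        + (if ?R (Suc j) \<le> t then int (v ! j) - int b else 0)"
      by (rule Phi_swap[OF jk lv refl])
    have "(if ?R j \<le> t then int (v ! Suc j) - int a else 0)
        + (if ?R (Suc j) \<le> t then int (v ! j) - int b else 0) \<le> 0"
      using h xy by auto
    then show ?thesis using sw ph by simp
  qed
  have zero: "?G (?M[j := a, Suc j := b]) * C a b m m = 0" if ne: "\<not> (a = m \<and> b = m)" for a b
  proof (rule ccontr)
    assume "?G (?M[j := a, Suc j := b]) * C a b m m \<noteq> 0"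
    then have g: "?G (?M[j := a, Suc j := b]) \<noteq> 0" and c: "C a b m m \<noteq> 0" by auto
    have h: "m \<le> a" "m + m \<le> a + b" using H1[OF c] by auto
    have p1: "Phi k ?R (?M[j := a, Suc j := b]) (?R j) \<le> int ((?R j + 1) * m)" using IH1[OF g xk(1)] .
    have p2: "Phi k ?R (?M[j := a, Suc j := b]) (?R (Suc j)) \<le> int ((?R (Suc j) + 1) * m)" using IH1[OF g xk(2)] .
    have u1: "Phi k ?R (?M[j := a, Suc j := b]) (?R j) = int ((?R j + 1) * m) + (int a - int m)"
      using Phi_update[OF jk, of ?R m a b "?R j"] Phi_M[OF Rp xk(1), of m] xy by simp
    have u2: "Phi k ?R (?M[j := a, Suc j := b]) (?R (Suc j)) = int ((?R (Suc j) + 1) * m) + (int a - int m) + (int b - int m)"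
      using Phi_update[OF jk, of ?R m a b "?R (Suc j)"] Phi_M[OF Rp xk(2), of m] xy by simp
    have "a \<le> m" using p1 u1 by simp
    moreover have "a + b \<le> m + m" using p2 u2 by simp
    ultimately show False using h ne by simp
  qed
  have Mw: "?M \<in> words n k" using replicate_words[OF mn] .
  have Mid: "?M[j := m, Suc j := m] = ?M"
    using jk by (intro nth_equalityI) (auto simp: nth_list_update nth_replicate)
  have "braid_op C n k j ?G ?M = (\<Sum>a<n. \<Sum>b<n. ?G (?M[j := a, Suc j := b]) * C a b m m)"
    unfolding braid_op_def using Mw jk by simp
  also have "\<dots> = (\<Sum>a<n. if a = m then ?G ?M * C m m m m else 0)"
  proof (rule sum.cong[OF refl])
    fix a assume "a \<in> {..<n}"
    show "(\<Sum>b<n. ?G (?M[j := a, Suc j := b]) * C a b m m) = (if a = m then ?G ?M * C m m m m else 0)"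
    proof (cases "a = m")
      case True
      have "(\<Sum>b<n. ?G (?M[j := a, Suc j := b]) * C a b m m) = (\<Sum>b<n. if b = m then ?G ?M * C m m m m else 0)"
      proof (rule sum.cong[OF refl])
        fix b assume "b \<in> {..<n}"
        show "?G (?M[j := a, Suc j := b]) * C a b m m = (if b = m then ?G ?M * C m m m m else 0)"
          using zero[of a b] True Mid by auto
      qed
      also have "\<dots> = ?G ?M * C m m m m" using mn by simp
      finally show ?thesis using True by simp
    next
      case False
      have "(\<Sum>b<n. ?G (?M[j := a, Suc j := b]) * C a b m m) = (\<Sum>b<n. 0)"
        by (rule sum.cong[OF refl]) (use zero False in blast)
      then show ?thesis using False by simp
    qed
  qed
  also have "\<dots> = ?G ?M * C m m m m" using mn by simp
  finally have "word_op C n k (j # ws) (eM k m) ?M = q ^ length (j # ws)"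
    using WO IH2 H2 by (simp add: mult.commute)
  then show ?case using part1 by blast
qed



lemma nonroot_powi:
  fixes \<alpha> :: "'a::field"
  assumes a0: "\<alpha> \<noteq> 0" and nr: "\<not> root_of_unity \<alpha>" and e: "\<alpha> powi z = 1"
  shows "z = 0"
proof (rule ccontr)
  assume z: "z \<noteq> 0"
  show False
  proof (cases "z > 0")
    case True
    then have "\<alpha> ^ nat z = 1" using e power_int_nonneg_exp[of z \<alpha>] by simp
    then show False using nr True unfolding root_of_unity_def by (meson zero_less_nat_eq)
  next
    case False
    then have zn: "z = - int (nat (- z))" "nat (- z) > 0" using z by auto
    have "\<alpha> powi (- int (nat (- z))) = 1" using e zn(1) by simp
    then have "inverse (\<alpha> ^ nat (- z)) = 1" by (simp only: power_int_minus power_int_of_nat)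
    then have "\<alpha> ^ nat (- z) = 1" by (metis inverse_1 inverse_inverse_eq)
    then show False using nr zn(2) unfolding root_of_unity_def by blast
  qed
qed

lemma choose_m:
  fixes \<gamma> \<alpha> \<beta> :: "'a::field"
  assumes n0: "0 < n" and pr: "primitive_root n \<gamma>"
    and a0: "\<alpha> \<noteq> 0" and b0: "\<beta> \<noteq> 0"
    and nra: "\<not> root_of_unity \<alpha>" and nrb: "\<not> root_of_unity \<beta>"
    and aw: "\<alpha> ^ w = \<beta> ^ n"
  shows "\<exists>m<n. (\<alpha> powi r * (\<beta> * inverse (\<gamma> ^ m)) powi (i - int m) = 1
               \<or> \<not> root_of_unity (\<alpha> powi r * (\<beta> * inverse (\<gamma> ^ m)) powi (i - int m)))"
proof -
  have gn: "\<gamma> ^ n = 1" using pr unfolding primitive_root_def by simp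
  have g0: "\<gamma> \<noteq> 0" using gn n0 by (metis power_0_left less_not_refl2 zero_neq_one)
  define q0 where "q0 = \<alpha> powi r * \<beta> powi i"
  have q0e: "\<alpha> powi r * (\<beta> * inverse (\<gamma> ^ 0)) powi (i - int 0) = q0" unfolding q0_def by simp
  show ?thesis
  proof (cases "root_of_unity q0")
    case False
    then show ?thesis using n0 q0e by (intro exI[of _ 0]) simp
  next
    case True
    then obtain N where N: "N > 0" "q0 ^ N = 1" unfolding root_of_unity_def by blast
    show ?thesis
    proof (cases "n = 1")
      case True
      then have b: "\<beta> = \<alpha> ^ w" using aw by simp
      have q0a: "q0 = \<alpha> powi (r + int w * i)"
        unfolding q0_def b power_int_power using power_int_add[of \<alpha> r "int w * i"] a0 by simp
      then have "\<alpha> powi ((r + int w * i) * int N) = 1" using N(2) by (simp add: power_int_power')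
      then have "(r + int w * i) * int N = 0" using nonroot_powi[OF a0 nra] by blast
      then have "r + int w * i = 0" using N(1) by simp
      then have "q0 = 1" using q0a by simp
      then show ?thesis using n0 q0e by (intro exI[of _ 0]) simp
    next
      case False
      then have n1: "1 < n" using n0 by simp
      define q1 where "q1 = \<alpha> powi r * (\<beta> * inverse (\<gamma> ^ 1)) powi (i - int 1)"
      define e where "e = \<beta> * \<gamma> powi (i - 1)"
      have gi: "\<gamma> powi (i - 1) * inverse (\<gamma> powi (i - 1)) = 1" using g0 by simp
      have bi: "\<beta> powi (i - 1) * \<beta> = \<beta> powi i"
        using power_int_add_1[of \<beta> "i - 1"] b0 by simp
      have key: "q1 * e = q0"
      proof -
        have "q1 * e = \<alpha> powi r * (\<beta> powi (i - 1) * \<beta>) * (\<gamma> powi (i - 1) * inverse (\<gamma> powi (i - 1)))"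
          unfolding q1_def e_def by (simp add: power_int_mult_distrib power_int_inverse mult_ac)
        then show ?thesis unfolding q0_def using gi bi by simp
      qed
      have "\<not> root_of_unity q1"
      proof
        assume "root_of_unity q1"
        then obtain M where M: "M > 0" "q1 ^ M = 1" unfolding root_of_unity_def by blast
        let ?K = "N * M * n"
        have K0: "?K > 0" using N M n0 by simp
        have "q0 ^ ?K = 1" using N(2) by (metis mult.assoc power_mult power_one)
        moreover have "q1 ^ ?K = 1" using M(2) by (metis mult.commute mult.left_commute power_mult power_one)
        ultimately have eK: "e ^ ?K = 1" using key by (metis mult_1 power_mult_distrib)
        have "(\<gamma> powi (i - 1)) ^ ?K = \<gamma> powi ((i - 1) * int ?K)" by (rule power_int_power')
        also have "(i - 1) * int ?K = int n * ((i - 1) * int (N * M))" by (simp add: algebra_simps)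
        also have "\<gamma> powi (int n * ((i - 1) * int (N * M))) = 1"
          by (simp only: power_int_mult power_int_of_nat gn power_int_1_left power_one)
        finally have "(\<gamma> powi (i - 1)) ^ ?K = 1" .
        then have "\<beta> ^ ?K = 1" using eK unfolding e_def by (simp add: power_mult_distrib)
        then show False using nrb K0 unfolding root_of_unity_def by blast
      qed
      then show ?thesis using n1 unfolding q1_def by (intro exI[of _ 1]) simp
    qed
  qed
qed



interpretation tv: vector_space "tscale :: 'a::field \<Rightarrow> (nat list \<Rightarrow> 'a) \<Rightarrow> (nat list \<Rightarrow> 'a)"
  by unfold_locales (auto simp: tscale_def fun_eq_iff algebra_simps)

lemma braid_op_add: "braid_op C n k j (f + g) = braid_op C n k j f + braid_op C n k j g"
  unfolding braid_op_def by (auto simp: fun_eq_iff distrib_right sum.distrib)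

lemma braid_op_scale: "braid_op C n k j (tscale c f) = tscale c (braid_op C n k j f)"
  unfolding braid_op_def tscale_def by (auto simp: fun_eq_iff sum_distrib_left mult.assoc)

lemma word_op_lin: "word_op C n k ws (f + g) = word_op C n k ws f + word_op C n k ws g
   \<and> word_op C n k ws (tscale c f) = tscale c (word_op C n k ws f)"
proof (induction ws)
  case Nil show ?case by (simp only: word_op_Nil id_apply)
next
  case (Cons j ws)
  show ?case by (simp only: word_op_Cons comp_apply Cons.IH braid_op_add braid_op_scale)
qed

lemma mats_lin: "matsumoto C n k \<sigma> (f + g) = matsumoto C n k \<sigma> f + matsumoto C n k \<sigma> g"
   "matsumoto C n k \<sigma> (tscale c f) = tscale c (matsumoto C n k \<sigma> f)"
  by (simp_all only: matsumoto_def word_op_lin)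

lemma sum_fun_app: "finite A \<Longrightarrow> (sum F A) x = (\<Sum>a\<in>A. F a x)"
  by (induction rule: finite_induct) auto

lemma sym_add: "braided_symmetrizer C n k (f + g) = braided_symmetrizer C n k f + braided_symmetrizer C n k g"
  unfolding braided_symmetrizer_def mats_lin(1) by (rule ext) (simp add: sum.distrib)

lemma sym_scale: "braided_symmetrizer C n k (tscale c f) = tscale c (braided_symmetrizer C n k f)"
  unfolding braided_symmetrizer_def mats_lin(2) by (rule ext) (simp add: tscale_def sum_distrib_left)

lemma kernel_subspace: "tv.subspace (symmetrizer_kernel C n k)"
proof -
  have t0: "\<And>X. tscale 0 X = (0 :: nat list \<Rightarrow> 'a)" by (simp add: tscale_def fun_eq_iff)
  have z: "braided_symmetrizer C n k 0 = (\<lambda>_. 0::'a)"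
    by (metis t0 sym_scale zero_fun_def)
  show ?thesis unfolding tv.subspace_def
  proof (intro conjI ballI allI)
    show "0 \<in> symmetrizer_kernel C n k"
      unfolding symmetrizer_kernel_def tensor_space_def using z by simp
  next
    fix x y assume x: "x \<in> symmetrizer_kernel C n k" and y: "y \<in> symmetrizer_kernel C n k"
    then have "braided_symmetrizer C n k (x + y) = (\<lambda>_. 0)"
      unfolding symmetrizer_kernel_def sym_add by (simp add: fun_eq_iff)
    moreover have "x + y \<in> tensor_space n k" using x y unfolding symmetrizer_kernel_def tensor_space_def by simp
    ultimately show "x + y \<in> symmetrizer_kernel C n k" unfolding symmetrizer_kernel_def by simp
  next
    fix c x assume x: "x \<in> symmetrizer_kernel C n k"
    then have "braided_symmetrizer C n k (tscale c x) = (\<lambda>_. 0)"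
      unfolding symmetrizer_kernel_def sym_scale by (simp add: fun_eq_iff tscale_def)
    moreover have "tscale c x \<in> tensor_space n k" using x unfolding symmetrizer_kernel_def tensor_space_def tscale_def by simp
    ultimately show "tscale c x \<in> symmetrizer_kernel C n k" unfolding symmetrizer_kernel_def by simp
  qed
qed

lemma dim_lt:
  fixes K T :: "(nat list \<Rightarrow> 'a::field) set"
  assumes sK: "tv.subspace K" and KT: "K \<subseteq> T" and xT: "x \<in> T" and xK: "x \<notin> K"
    and TW: "T \<subseteq> tv.span W" and fW: "finite W"
  shows "tv.dim K < tv.dim T"
proof -
  obtain A where A: "A \<subseteq> K" "tv.independent A" "K \<subseteq> tv.span A" "card A = tv.dim K"
    using tv.basis_exists by blast
  have fA: "finite A" using tv.independent_span_bound[OF fW A(2)] A(1) KT TW by blast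
  have spA: "tv.span A \<subseteq> K" using tv.span_minimal[OF A(1) sK] .
  have xA: "x \<notin> tv.span A" using spA xK by blast
  have ind: "tv.independent (insert x A)" using A(2) xA by (simp add: tv.independent_insert)
  have iT: "insert x A \<subseteq> T" using A(1) KT xT by blast
  obtain B where B: "insert x A \<subseteq> B" "B \<subseteq> T" "tv.independent B" "T \<subseteq> tv.span B"
    using tv.maximal_independent_subset_extend[OF iT ind] by blast
  have fB: "finite B" using tv.independent_span_bound[OF fW B(3)] B(2) TW by blast
  have cB: "card B = tv.dim T" using tv.basis_card_eq_dim[OF B(2) B(4) B(3)] .
  have "card (insert x A) \<le> card B" using card_mono[OF fB B(1)] .
  moreover have "card (insert x A) = Suc (card A)" using fA xA tv.span_base by (metis card_insert_disjoint)
  ultimately show ?thesis using A(4) cB by simp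
qed

definition eu :: "nat list \<Rightarrow> nat list \<Rightarrow> 'a::field" where
  "eu u = (\<lambda>v. if v = u then 1 else 0)"

lemma finite_words: "finite (words n k)"
proof -
  have "words n k = {xs. set xs \<subseteq> {..<n} \<and> length xs = k}" unfolding words_def by auto
  then show ?thesis using finite_lists_length_eq[of "{..<n}" k] by simp
qed

lemma tensor_span: "tensor_space n k \<subseteq> tv.span ((eu :: nat list \<Rightarrow> nat list \<Rightarrow> 'a::field) ` words n k)"
proof
  fix f :: "nat list \<Rightarrow> 'a" assume f: "f \<in> tensor_space n k"
  have "f = (\<Sum>u\<in>words n k. tscale (f u) (eu u))"
  proof (rule ext)
    fix v
    have "(\<Sum>u\<in>words n k. tscale (f u) (eu u)) v = (\<Sum>u\<in>words n k. f u * (if v = u then 1 else 0))"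
      by (simp add: sum_fun_app[OF finite_words] tscale_def eu_def)
    also have "\<dots> = (\<Sum>u\<in>words n k. if u = v then f v else 0)"
      by (rule sum.cong) auto
    also have "\<dots> = f v" using f unfolding tensor_space_def by (simp add: finite_words)
    finally show "f v = (\<Sum>u\<in>words n k. tscale (f u) (eu u)) v" by simp
  qed
  also have "\<dots> \<in> tv.span (eu ` words n k)"
    by (intro tv.span_sum tv.span_scale tv.span_base) auto
  finally show "f \<in> tv.span (eu ` words n k)" .
qed

lemma sym_at_M:
  fixes C :: "nat \<Rightarrow> nat \<Rightarrow> nat \<Rightarrow> nat \<Rightarrow> 'a::field"
  assumes H1: "\<And>a b p l. C a b p l \<noteq> 0 \<Longrightarrow> l \<le> a \<and> p + l \<le> a + b"
    and H2: "C m m m m = q" and mn: "m < n"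
  shows "braided_symmetrizer C n k (eM k m) (replicate k m) = gf k q"
proof -
  have "braided_symmetrizer C n k (eM k m) (replicate k m)
      = (\<Sum>\<sigma>\<in>{\<sigma>. \<sigma> permutes {..<k}}. q ^ ninv k (inv \<sigma>))"
    unfolding braided_symmetrizer_def
  proof (rule sum.cong[OF refl])
    fix \<sigma> assume "\<sigma> \<in> {\<sigma>. \<sigma> permutes {..<k}}"
    then have p: "\<sigma> permutes {..<k}" by simp
    let ?ws = "SOME ws. reduced_word k \<sigma> ws"
    have r: "reduced_word k \<sigma> ?ws" using reduced_props(1)[OF p] by (rule someI_ex)
    have g: "good ?ws" "length ?ws = ninv k (inv \<sigma>)" using reduced_props(2)[OF p r] by auto
    have wk: "\<forall>j\<in>set ?ws. Suc j < k" using r unfolding reduced_word_def by blast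
    show "matsumoto C n k \<sigma> (eM k m) (replicate k m) = q ^ ninv k (inv \<sigma>)"
    proof -
      have st: "word_op C n k ?ws (eM k m) (replicate k m) = q ^ length ?ws"
        by (rule strand[THEN conjunct2]) (use H1 H2 mn wk g(1) in auto)
      show ?thesis unfolding matsumoto_def using st g(2) by simp
    qed
  qed
  also have "\<dots> = gf k q" unfolding gf_def
    by (rule sum.reindex_bij_witness[where i=inv and j=inv])
       (auto simp: permutes_inv permutes_inv_inv)
  finally show ?thesis .
qed



lemma sum_lower:
  fixes f :: "nat \<Rightarrow> nat"
  assumes "\<And>k. 2 \<le> k \<Longrightarrow> 1 \<le> f k"
  shows "N - 2 \<le> (\<Sum>k<N. f k)"
proof (induction N)
  case 0 then show ?case by simp
next
  case (Suc N)
  show ?case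
  proof (cases "2 \<le> N")
    case True
    then have "1 \<le> f N" using assms by simp
    then show ?thesis using Suc by simp
  next
    case False
    then show ?thesis by simp
  qed
qed

theorem lemma5p9:
  fixes \<gamma> \<alpha> \<beta> :: "'a::field_char_0"
    and n w :: nat and r i :: int
  assumes "alg_closed_field TYPE('a)"
    and "0 < n" and "0 < w"
    and "primitive_root n \<gamma>"
    and "\<alpha> \<noteq> 0" and "\<beta> \<noteq> 0"
    and "\<not> root_of_unity \<alpha>" and "\<not> root_of_unity \<beta>"
    and "\<alpha> ^ w = \<beta> ^ n"
  shows "nichols_infinite_dimensional (braid_coef n \<gamma> \<alpha> \<beta> r i) n"
proof -
  note n0 = assms(2) and pr = assms(4) and a0 = assms(5) and b0 = assms(6)
  have gn: "\<gamma> ^ n = 1" using pr unfolding primitive_root_def by simp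
  have g0: "\<gamma> \<noteq> 0" using gn n0 by (metis power_0_left less_not_refl2 zero_neq_one)
  obtain m where mn: "m < n" and qc: "\<alpha> powi r * (\<beta> * inverse (\<gamma> ^ m)) powi (i - int m) = 1
      \<or> \<not> root_of_unity (\<alpha> powi r * (\<beta> * inverse (\<gamma> ^ m)) powi (i - int m))"
    using choose_m[OF n0 pr a0 b0 assms(7,8,9)] by blast
  define q where "q = \<alpha> powi r * (\<beta> * inverse (\<gamma> ^ m)) powi (i - int m)"
  define C where "C = braid_coef n \<gamma> \<alpha> \<beta> r i"
  have H1: "\<And>a b p l. C a b p l \<noteq> 0 \<Longrightarrow> l \<le> a \<and> p + l \<le> a + b"
    unfolding C_def by (rule braid_H1)
  have H2: "C m m m m = q" unfolding C_def q_def by (rule braid_H2[OF b0 g0 mn])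
  have comp: "1 \<le> nichols_component_dim C n k" if k2: "2 \<le> k" for k
  proof -
    let ?T = "tensor_space n k :: (nat list \<Rightarrow> 'a) set"
    let ?K = "symmetrizer_kernel C n k"
    have xT: "eM k m \<in> ?T"
      unfolding tensor_space_def eM_def using replicate_words[OF mn] by auto
    have "braided_symmetrizer C n k (eM k m) (replicate k m) = gf k q"
      by (rule sym_at_M) (use H1 H2 mn in auto)
    moreover have "gf k q \<noteq> 0" using gf_nonzero qc unfolding q_def by blast
    ultimately have "braided_symmetrizer C n k (eM k m) \<noteq> (\<lambda>_. 0)" by force
    then have xK: "eM k m \<notin> ?K" unfolding symmetrizer_kernel_def by blast
    have KT: "?K \<subseteq> ?T" unfolding symmetrizer_kernel_def by blast
    have "tv.dim ?K < tv.dim ?T"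
      by (rule dim_lt[OF kernel_subspace KT xT xK tensor_span]) (simp add: finite_words)
    then show ?thesis unfolding nichols_component_dim_def using k2 by simp
  qed
  show ?thesis
    unfolding nichols_infinite_dimensional_def C_def[symmetric]
  proof
    fix D :: nat
    have "Suc (Suc (Suc D)) - 2 \<le> (\<Sum>k<Suc (Suc (Suc D)). nichols_component_dim C n k)"
      by (rule sum_lower) (rule comp)
    then show "\<exists>N. D < (\<Sum>k<N. nichols_component_dim C n k)" by (intro exI[of _ "Suc (Suc (Suc D))"]) simp
  qed
qed

end
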